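(* Let $n>1$, let $K\subseteq\mathbb{R}^n$ be a pointed closed convex cone with nonempty interior inducing the partial order $x\preceq y\iff y-x\in K$, and let $Y$ be a nonempty open subset of $\mathbb{R}^n$ equipped with the relative Euclidean topology $\tau$ and the restriction of $\preceq$. Then $(Y,\tau,\preceq)$ is a partially ordered topological space and the canonical map $y\mapsto y^\downarrow$ topologically order-embeds $(Y,\tau,\preceq)$ in $(C(Y),\tau_F,\subseteq)$.
   Context: A partially ordered topological space is a topological space with a partial order whose graph is closed in the product. For $y\in Y$, $y^\downarrow=\{u\in Y:u\preceq y\}$ (taken inside $Y$). $C(Y)$ = closed subsets of $Y$, $C^\downarrow(Y)=\{y^\downarrow:y\in Y\}$. The Fell topology $\tau_F$ on $C(Y)$ is generated by the sets $\{A\in C(Y):A\cap O\neq\emptyset\}$ ($O\subseteq Y$ open) and $\{A\in C(Y):A\cap D=\emptyset\}$ ($D\subseteq Y$ compact). "Topologically order-embeds" means: $x\preceq y\iff x^\downarrow\subseteq y^\downarrow$, and $y\mapsto y^\downarrow$ is a homeomorphism from $(Y,\tau)$ onto $C^\downarrow(Y)$ with the relative Fell topology. *)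

theory Defs
  imports "HOL-Analysis.Analysis"
begin

definition partial_order_on_set :: "'a set \<Rightarrow> ('a \<Rightarrow> 'a \<Rightarrow> bool) \<Rightarrow> bool" where
  "partial_order_on_set S le \<longleftrightarrow>
     (\<forall>x\<in>S. le x x) \<and>
     (\<forall>x\<in>S. \<forall>y\<in>S. le x y \<and> le y x \<longrightarrow> x = y) \<and>
     (\<forall>x\<in>S. \<forall>y\<in>S. \<forall>z\<in>S. le x y \<and> le y z \<longrightarrow> le x z)"

definition po_top_space :: "'a topology \<Rightarrow> ('a \<Rightarrow> 'a \<Rightarrow> bool) \<Rightarrow> bool" where
  "po_top_space X le \<longleftrightarrow>
     partial_order_on_set (topspace X) le \<and>
     closedin (prod_topology X X) {(x, y). x \<in> topspace X \<and> y \<in> topspace X \<and> le x y}"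

definition downset :: "'a topology \<Rightarrow> ('a \<Rightarrow> 'a \<Rightarrow> bool) \<Rightarrow> 'a \<Rightarrow> 'a set" where
  "downset X le y = {u \<in> topspace X. le u y}"

definition closed_sets :: "'a topology \<Rightarrow> 'a set set" where
  "closed_sets X = {A. closedin X A}"

definition fell_topology :: "'a topology \<Rightarrow> 'a set topology" where
  "fell_topology X = subtopology
     (topology_generated_by
        ({{A \<in> closed_sets X. A \<inter> U \<noteq> {}} | U. openin X U} \<union>
         {{A \<in> closed_sets X. A \<inter> D = {}} | D. compactin X D}))
     (closed_sets X)"

definition top_order_embeds_down :: "'a topology \<Rightarrow> ('a \<Rightarrow> 'a \<Rightarrow> bool) \<Rightarrow> bool" where
  "top_order_embeds_down X le \<longleftrightarrow>
     (\<forall>x\<in>topspace X. \<forall>y\<in>topspace X. le x y \<longleftrightarrow> downset X le x \<subseteq> downset X le y) \<and>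
     homeomorphic_map X
       (subtopology (fell_topology X) (downset X le ` topspace X))
       (downset X le)"

end

theory Submission
  imports Defs
begin

lemma cone_add:
  fixes K :: "'a::real_vector set"
  assumes "cone K" "convex K" "a \<in> K" "b \<in> K"
  shows "a + b \<in> K"
proof -
  have "(1/2) *\<^sub>R a + (1/2) *\<^sub>R b \<in> K"
    using assms convexD[of K a b "1/2" "1/2"] by auto
  then have "2 *\<^sub>R ((1/2) *\<^sub>R a + (1/2) *\<^sub>R b) \<in> K"
    using assms(1) unfolding cone_def by auto
  then show ?thesis by (simp add: scaleR_add_right)
qed

lemma closed_le_set:
  fixes K :: "'a::real_normed_vector set"
  assumes "closed K"
  shows "closed {u. y - u \<in> K}"
proof -
  have "closed ((\<lambda>u. y - u) -` K)"
    by (rule continuous_closed_vimage[OF assms]) (intro continuous_intros)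
  then show ?thesis by (simp add: vimage_def)
qed

theorem theorem3p4:
  fixes K :: "(real ^ 'n) set" and Y :: "(real ^ 'n) set"
  assumes "CARD('n) > 1"
    and "cone K" and "convex K" and "closed K"
    and "K \<inter> uminus ` K \<subseteq> {0}"
    and "interior K \<noteq> {}"
    and "open Y" and "Y \<noteq> {}"
  shows "po_top_space (subtopology euclidean Y) (\<lambda>x y. y - x \<in> K)
       \<and> top_order_embeds_down (subtopology euclidean Y) (\<lambda>x y. y - x \<in> K)"
proof -
  define X where "X = subtopology euclidean Y"
  define le where "le = (\<lambda>x y::real^'n. y - x \<in> K)"
  have tX: "topspace X = Y" by (simp add: X_def)
  have Kne: "K \<noteq> {}" using assms(6) interior_subset by blast
  have K0: "0 \<in> K" using cone_contains_0 assms(2) Kne by blast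
  have Kadd: "a + b \<in> K" if "a \<in> K" "b \<in> K" for a b
    using cone_add assms(2,3) that by blast
  have Kpt: "a = 0" if "a \<in> K" "- a \<in> K" for a
  proof -
    have "a \<in> uminus ` K" using that(2) by (metis image_eqI minus_minus)
    then show ?thesis using assms(5) that(1) by blast
  qed
  have Kscale: "c *\<^sub>R a \<in> K" if "a \<in> K" "c \<ge> 0" for a c
    using assms(2) that unfolding cone_def by auto
  have openX: "openin X U \<longleftrightarrow> open U \<and> U \<subseteq> Y" for U
    unfolding X_def using openin_open_eq[OF assms(7)] by simp
  have compX: "compactin X D \<longleftrightarrow> compact D \<and> D \<subseteq> Y" for D
    unfolding X_def by (simp add: compactin_subtopology)
  have ds: "downset X le y = {u \<in> Y. y - u \<in> K}" for y
    unfolding downset_def tX le_def by simp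
  have ds_closed: "downset X le y \<in> closed_sets X" for y
  proof -
    have "closedin X (Y \<inter> {u. y - u \<in> K})"
      unfolding X_def using closedin_closed_Int closed_le_set[OF assms(4)] by blast
    then show ?thesis unfolding closed_sets_def ds by (simp add: Collect_conj_eq Int_commute)
  qed
  have ds_self: "y \<in> downset X le y" if "y \<in> Y" for y
    using that K0 ds by simp
  have po: "partial_order_on_set Y le"
    unfolding partial_order_on_set_def le_def
  proof (intro conjI ballI impI)
    fix x show "x - x \<in> K" using K0 by simp
  next
    fix x y assume "y - x \<in> K \<and> x - y \<in> K"
    then show "x = y" using Kpt[of "y - x"] by simp
  next
    fix x y z assume "y - x \<in> K \<and> z - y \<in> K"
    then have "(z - y) + (y - x) \<in> K" using Kadd by blast
    then show "z - x \<in> K" by simp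
  qed
  have graph: "closedin (prod_topology X X) {(x, y). x \<in> topspace X \<and> y \<in> topspace X \<and> le x y}"
  proof -
    have cl: "closed {p::(real^'n) \<times> (real^'n). snd p - fst p \<in> K}"
    proof -
      have "closed ((\<lambda>p::(real^'n) \<times> (real^'n). snd p - fst p) -` K)"
        by (rule continuous_closed_vimage[OF assms(4)]) (intro continuous_intros)
      then show ?thesis by (simp add: vimage_def)
    qed
    have "closedin (subtopology euclidean (Y \<times> Y)) ((Y \<times> Y) \<inter> {p. snd p - fst p \<in> K})"
      using closedin_closed_Int[OF cl] by blast
    moreover have "(Y \<times> Y) \<inter> {p. snd p - fst p \<in> K} = {(x, y). x \<in> Y \<and> y \<in> Y \<and> le x y}"
      unfolding le_def by auto
    ultimately show ?thesis unfolding X_def by simp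
  qed
  have ordemb: "\<forall>x\<in>topspace X. \<forall>y\<in>topspace X. le x y \<longleftrightarrow> downset X le x \<subseteq> downset X le y"
  proof (intro ballI iffI)
    fix x y assume "x \<in> topspace X" "y \<in> topspace X" "le x y"
    show "downset X le x \<subseteq> downset X le y"
    proof
      fix u assume "u \<in> downset X le x"
      then have "u \<in> Y" "x - u \<in> K" unfolding ds by auto
      moreover have "(y - x) + (x - u) \<in> K" using Kadd \<open>le x y\<close> \<open>x - u \<in> K\<close> unfolding le_def by blast
      ultimately show "u \<in> downset X le y" unfolding ds by simp
    qed
  next
    fix x y assume "x \<in> topspace X" "y \<in> topspace X" "downset X le x \<subseteq> downset X le y"
    then show "le x y" using ds_self tX ds le_def by auto
  qed
  define S where "S = ({{A \<in> closed_sets X. A \<inter> U \<noteq> {}} | U. openin X U} \<union>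
         {{A \<in> closed_sets X. A \<inter> D = {}} | D. compactin X D})"
  define G where "G = topology_generated_by S"
  have hitS: "{A \<in> closed_sets X. A \<inter> U \<noteq> {}} \<in> S" if "openin X U" for U
    unfolding S_def using that by blast
  have missS: "{A \<in> closed_sets X. A \<inter> D = {}} \<in> S" if "compactin X D" for D
    unfolding S_def using that by blast
  have ds_in: "downset X le y \<in> \<Union>S" if "y \<in> Y" for y
  proof -
    have "openin X Y" using openX assms(7) by simp
    then show ?thesis using hitS[of Y] ds_closed ds_self[OF that] ds by blast
  qed
  define Tgt where "Tgt = subtopology (fell_topology X) (downset X le ` topspace X)"
  have Tgt_eq: "Tgt = subtopology G (closed_sets X \<inter> downset X le ` Y)"
    unfolding Tgt_def fell_topology_def G_def S_def tX by (simp add: subtopology_subtopology)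
  have tTgt: "topspace Tgt = downset X le ` Y"
    unfolding Tgt_eq G_def using ds_in ds_closed by auto
  have inj: "inj_on (downset X le) Y"
  proof (rule inj_onI)
    fix x y assume "x \<in> Y" "y \<in> Y" "downset X le x = downset X le y"
    then have "x - y \<in> K" "y - x \<in> K" using ds_self ds by auto
    then show "x = y" using Kpt[of "x - y"] by simp
  qed
  have contG: "continuous_map X G (downset X le)"
    unfolding G_def
  proof (rule continuous_on_generated_topo)
    show "downset X le ` topspace X \<subseteq> \<Union>S" using ds_in tX by auto
  next
    fix W assume "W \<in> S"
    then consider U where "openin X U" "W = {A \<in> closed_sets X. A \<inter> U \<noteq> {}}"
      | D where "compactin X D" "W = {A \<in> closed_sets X. A \<inter> D = {}}"
      unfolding S_def by blast
    then show "openin X (downset X le -` W \<inter> topspace X)"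
    proof cases
      case 1
      then have U: "open U" "U \<subseteq> Y" using openX by auto
      have "downset X le -` W \<inter> topspace X = Y \<inter> (\<Union>x\<in>U. \<Union>k\<in>K. {x + k})"
      proof (intro equalityI subsetI)
        fix y assume "y \<in> downset X le -` W \<inter> topspace X"
        then obtain u where "u \<in> U" "y - u \<in> K" "y \<in> Y" using 1 unfolding tX ds by auto
        moreover have "y = u + (y - u)" by simp
        ultimately show "y \<in> Y \<inter> (\<Union>x\<in>U. \<Union>k\<in>K. {x + k})" by blast
      next
        fix y assume "y \<in> Y \<inter> (\<Union>x\<in>U. \<Union>k\<in>K. {x + k})"
        then obtain u k where "y \<in> Y" "u \<in> U" "k \<in> K" "y = u + k" by blast
        then have "u \<in> downset X le y \<inter> U" using U unfolding ds by auto
        then show "y \<in> downset X le -` W \<inter> topspace X"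
          using 1 ds_closed \<open>y \<in> Y\<close> unfolding tX by auto
      qed
      moreover have "open (\<Union>x\<in>U. \<Union>k\<in>K. {x + k})" using open_sums U by blast
      ultimately show ?thesis using openX assms(7) by (simp add: open_Int)
    next
      case 2
      then have D: "compact D" "D \<subseteq> Y" using compX by auto
      have "downset X le -` W \<inter> topspace X = Y - (\<Union>k\<in>K. \<Union>x\<in>D. {k + x})"
      proof (intro equalityI subsetI)
        fix y assume a: "y \<in> downset X le -` W \<inter> topspace X"
        then have "y \<in> Y" "\<forall>d\<in>D. y - d \<notin> K" using 2 D unfolding tX ds by auto
        then show "y \<in> Y - (\<Union>k\<in>K. \<Union>x\<in>D. {k + x})" by auto
      next
        fix y assume a: "y \<in> Y - (\<Union>k\<in>K. \<Union>x\<in>D. {k + x})"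
        have "downset X le y \<inter> D = {}"
        proof (rule ccontr)
          assume "downset X le y \<inter> D \<noteq> {}"
          then obtain d where "d \<in> D" "y - d \<in> K" unfolding ds by auto
          moreover have "y = (y - d) + d" by simp
          ultimately show False using a by blast
        qed
        then show "y \<in> downset X le -` W \<inter> topspace X"
          using 2 ds_closed a unfolding tX by auto
      qed
      moreover have "closed (\<Union>k\<in>K. \<Union>x\<in>D. {k + x})" using closed_compact_sums D assms(4) by blast
      ultimately show ?thesis using openX assms(7) by (simp add: open_Diff)
    qed
  qed
  have cont: "continuous_map X Tgt (downset X le)"
    unfolding Tgt_eq
    by (rule continuous_map_into_subtopology[OF contG]) (use ds_closed tX in auto)
  have key: "\<exists>U D. openin X U \<and> compactin X D \<and> downset X le y \<inter> U \<noteq> {} \<and> downset X le y \<inter> D = {}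
     \<and> (\<forall>y'\<in>Y. downset X le y' \<inter> U \<noteq> {} \<and> downset X le y' \<inter> D = {} \<longrightarrow> y' \<in> V)"
    if V: "open V" "V \<subseteq> Y" "y \<in> V" for y V
  proof -
    obtain r where r: "r > 0" "cball y r \<subseteq> V" using V open_contains_cball by blast
    define T where "T = {w. norm w = r \<and> - w \<in> K}"
    have "\<exists>\<delta>>0. \<delta> < r \<and> (\<forall>w\<in>T. \<delta> < infdist w K)"
    proof (cases "T = {}")
      case True then show ?thesis using r by (intro exI[of _ "r/2"]) auto
    next
      case False
      have cT: "compact T"
      proof -
        have "closed T"
        proof -
          have "closed {w. norm w = r}" by (intro closed_Collect_eq continuous_intros)
          moreover have "closed {w. - w \<in> K}"
            using closed_le_set[OF assms(4), of 0] by simp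
          ultimately show ?thesis unfolding T_def Collect_conj_eq by (rule closed_Int)
        qed
        moreover have "bounded T" unfolding T_def bounded_iff by auto
        ultimately show ?thesis using compact_eq_bounded_closed by blast
      qed
      have "continuous_on T (\<lambda>w. infdist w K)" by (intro continuous_intros)
      then obtain w0 where w0: "w0 \<in> T" "\<forall>w\<in>T. infdist w0 K \<le> infdist w K"
        using continuous_attains_inf[OF cT False] by blast
      have "w0 \<notin> K"
      proof
        assume "w0 \<in> K"
        then have "w0 = 0" using Kpt w0(1) unfolding T_def by blast
        then show False using w0(1) r unfolding T_def by simp
      qed
      then have m: "infdist w0 K > 0" using infdist_pos_not_in_closed assms(4) Kne by blast
      show ?thesis
        by (rule exI[of _ "min (r/2) (infdist w0 K / 2)"]) (use m r w0 in auto)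
    qed
    then obtain \<delta> where d: "\<delta> > 0" "\<delta> < r" "\<forall>w\<in>T. \<delta> < infdist w K" by blast
    define U where "U = ball y \<delta>"
    define D where "D = {z. norm (z - y) = r \<and> infdist (z - y) K \<le> \<delta>}"
    have cbY: "cball y r \<subseteq> Y" using r V by blast
    have UY: "U \<subseteq> Y" unfolding U_def using d cbY by auto
    have DY: "D \<subseteq> Y" unfolding D_def using cbY by (auto simp: dist_norm norm_minus_commute)
    have oU: "openin X U" using openX UY U_def by simp
    have cD: "compactin X D"
    proof -
      have "closed D" unfolding D_def
        by (simp add: Collect_conj_eq, intro closed_Int closed_Collect_eq closed_Collect_le continuous_intros)
      moreover have "bounded D"
      proof -
        have "D \<subseteq> cball y r" unfolding D_def by (auto simp: dist_norm norm_minus_commute)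
        then show ?thesis using bounded_cball bounded_subset by blast
      qed
      ultimately show ?thesis using compX DY compact_eq_bounded_closed by blast
    qed
    have h1: "downset X le y \<inter> U \<noteq> {}" using ds_self[of y] V d unfolding U_def by (metis centre_in_ball disjoint_iff subsetD)
    have h2: "downset X le y \<inter> D = {}"
    proof (rule ccontr)
      assume "downset X le y \<inter> D \<noteq> {}"
      then obtain z where z: "z \<in> D" "y - z \<in> K" using ds by auto
      then have "z - y \<in> T" unfolding T_def D_def by auto
      then show False using d(3) z(1) unfolding D_def by force
    qed
    have h3: "y' \<in> V" if y': "y' \<in> Y" "downset X le y' \<inter> U \<noteq> {}" "downset X le y' \<inter> D = {}" for y'
    proof (rule ccontr)
      assume nV: "y' \<notin> V"
      have far: "norm (y' - y) > r"
      proof (rule ccontr)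
        assume "\<not> norm (y' - y) > r"
        then have "y' \<in> cball y r" by (simp add: dist_norm norm_minus_commute)
        then show False using nV r by blast
      qed
      obtain u where u: "u \<in> U" "y' - u \<in> K" using y'(2) ds by auto
      have ud: "norm (u - y) < \<delta>" using u unfolding U_def by (auto simp: dist_norm norm_minus_commute)
      define f where "f = (\<lambda>t::real. norm (u + t *\<^sub>R (y' - u) - y))"
      have "continuous_on {0..1} f" unfolding f_def by (intro continuous_intros)
      moreover have "f 0 \<le> r" using ud d unfolding f_def by simp
      moreover have "r \<le> f 1" using far unfolding f_def by simp
      ultimately obtain t where t: "0 \<le> t" "t \<le> 1" "f t = r"
        using IVT'[of f 0 r 1] by auto
      define z where "z = u + t *\<^sub>R (y' - u)"
      have zr: "norm (z - y) = r" using t unfolding z_def f_def by simp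
      have "z \<in> Y" using zr cbY by (auto simp: dist_norm norm_minus_commute)
      moreover have "y' - z \<in> K"
      proof -
        have "y' - z = (1 - t) *\<^sub>R (y' - u)" unfolding z_def by (simp add: algebra_simps)
        then show ?thesis using Kscale u t by simp
      qed
      moreover have "infdist (z - y) K \<le> \<delta>"
      proof -
        have "t *\<^sub>R (y' - u) \<in> K" using Kscale u t by simp
        then have "infdist (z - y) K \<le> dist (z - y) (t *\<^sub>R (y' - u))" by (rule infdist_le)
        also have "\<dots> = norm (u - y)" unfolding z_def dist_norm by (simp add: algebra_simps)
        finally show ?thesis using ud by simp
      qed
      ultimately have "z \<in> downset X le y' \<inter> D" using ds zr unfolding D_def by auto
      then show False using y'(3) by blast
    qed
    show ?thesis using oU cD h1 h2 h3 by blast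
  qed
  have om: "open_map X Tgt (downset X le)"
    unfolding open_map_def
  proof (intro allI impI)
    fix V assume "openin X V"
    then have V: "open V" "V \<subseteq> Y" using openX by auto
    show "openin Tgt (downset X le ` V)"
    proof (subst openin_subopen, intro ballI)
      fix A assume "A \<in> downset X le ` V"
      then obtain y where y: "y \<in> V" "A = downset X le y" by blast
      obtain U D where UD: "openin X U" "compactin X D" "downset X le y \<inter> U \<noteq> {}"
        "downset X le y \<inter> D = {}"
        "\<forall>y'\<in>Y. downset X le y' \<inter> U \<noteq> {} \<and> downset X le y' \<inter> D = {} \<longrightarrow> y' \<in> V"
        using key[OF V y(1)] by blast
      define W where "W = {A \<in> closed_sets X. A \<inter> U \<noteq> {}} \<inter> {A \<in> closed_sets X. A \<inter> D = {}}"
      have "openin G W" unfolding G_def W_def openin_topology_generated_by_iff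
        by (intro generate_topology_on.Int generate_topology_on.Basis hitS missS UD)
      then have oW: "openin Tgt (W \<inter> (closed_sets X \<inter> downset X le ` Y))"
        unfolding Tgt_eq by (rule openin_subtopology_Int)
      have "A \<in> W \<inter> (closed_sets X \<inter> downset X le ` Y)"
        using y UD(3,4) ds_closed V unfolding W_def by auto
      moreover have "W \<inter> (closed_sets X \<inter> downset X le ` Y) \<subseteq> downset X le ` V"
        using UD(5) unfolding W_def by auto
      ultimately show "\<exists>T. openin Tgt T \<and> A \<in> T \<and> T \<subseteq> downset X le ` V"
        using oW by blast
    qed
  qed
  have hm: "homeomorphic_map X Tgt (downset X le)"
    by (rule bijective_open_imp_homeomorphic_map[OF cont om]) (use tTgt tX inj in auto)
  show ?thesis
    using po graph ordemb hm tX
    unfolding po_top_space_def top_order_embeds_down_def X_def[symmetric] le_def[symmetric] Tgt_def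
    by simp
qed

end
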